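(* Let $V=\{1,\dots,n\}$ and let $Q=(q_{ij})_{i,j=1}^n$ be a symmetric matrix with $0\le q_{ij}\le 1$. Let $G$ be the inhomogeneous random graph on $V$ obtained by joining each pair $\{i,j\}$ independently with probability $q_{ij}$. Let $S\subseteq V$ with $|S|=m$, and let $G(S)$ be the union of the connected components of $G$ that intersect $S$. Let $0<\gamma<1$. (a) If $\sum_{j\in V\setminus S} q_{ij}\le\gamma$ for all nodes $i\in V$, then $\mathbb E[|G(S)|]\le \frac{1}{1-\gamma}\,m$. (b) If $q_{ij}=\gamma/n$ for all $i\neq j$ with $i\in V\setminus S$, then $\mathbb E[|G(S)|]\ge \frac{n+\gamma n}{n+\gamma m}\,m$.
   Context: $|G(S)|$ denotes the number of nodes of $G(S)$. *)

theory Defs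
  imports "HOL-Probability.Probability"
begin

text \<open>Node set V = {1..n}.  Potential edges are unordered pairs, encoded as (i,j) with i<j.\<close>

definition node_pairs :: "nat \<Rightarrow> (nat \<times> nat) set" where
  "node_pairs n = {(i, j). 1 \<le> i \<and> i < j \<and> j \<le> n}"

text \<open>Inhomogeneous random graph: each pair {i,j} (i<j) present independently with
  probability q i j.  A graph is a function from pairs to bool (False outside node_pairs).\<close>

definition random_graph :: "nat \<Rightarrow> (nat \<Rightarrow> nat \<Rightarrow> real) \<Rightarrow> (nat \<times> nat \<Rightarrow> bool) pmf" where
  "random_graph n q = Pi_pmf (node_pairs n) False (\<lambda>(i, j). bernoulli_pmf (q i j))"

definition adj :: "(nat \<times> nat \<Rightarrow> bool) \<Rightarrow> nat \<Rightarrow> nat \<Rightarrow> bool" where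
  "adj G i j \<longleftrightarrow> (i < j \<and> G (i, j)) \<or> (j < i \<and> G (j, i))"

definition comp_of :: "nat \<Rightarrow> (nat \<times> nat \<Rightarrow> bool) \<Rightarrow> nat set \<Rightarrow> nat set" where
  "comp_of n G S = {v \<in> {1..n}. \<exists>s\<in>S. (adj G)\<^sup>*\<^sup>* s v}"

end

theory Submission
  imports Defs
begin

fun walk :: "(nat\<times>nat\<Rightarrow>bool) \<Rightarrow> nat \<Rightarrow> nat list \<Rightarrow> bool" where
  "walk G a [] = True" | "walk G a (x#xs) = (adj G a x \<and> walk G x xs)"
fun edges :: "nat \<Rightarrow> nat list \<Rightarrow> (nat\<times>nat) list" where
  "edges a [] = []" | "edges a (x#xs) = (min a x, max a x) # edges x xs"
fun wt :: "(nat\<Rightarrow>nat\<Rightarrow>real) \<Rightarrow> nat \<Rightarrow> nat list \<Rightarrow> real" where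
  "wt q a [] = 1" | "wt q a (x#xs) = q a x * wt q x xs"

lemma edges_set: "k \<in> set (edges a xs) \<Longrightarrow> fst k \<in> set (a#xs) \<and> snd k \<in> set (a#xs)"
proof (induction xs arbitrary: a)
  case (Cons x xs)
  show ?case
  proof (cases "k = (min a x, max a x)")
    case True thus ?thesis by (auto simp: min_def max_def)
  next
    case False thus ?thesis using Cons by auto
  qed
qed simp

lemma edges_distinct: "distinct (a#xs) \<Longrightarrow> distinct (edges a xs)"
proof (induction xs arbitrary: a)
  case (Cons x xs)
  have "(min a x, max a x) \<notin> set (edges x xs)"
  proof
    assume "(min a x, max a x) \<in> set (edges x xs)"
    from edges_set[OF this] Cons.prems show False by (auto simp: min_def max_def split: if_splits)
  qed
  with Cons show ?case by auto
qed simp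

lemma walk_edges: "distinct (a#xs) \<Longrightarrow> walk G a xs \<longleftrightarrow> (\<forall>k\<in>set (edges a xs). G k)"
  by (induction xs arbitrary: a) (auto simp: adj_def min_def max_def)

lemma edges_pairs: "distinct (a#xs) \<Longrightarrow> set (a#xs) \<subseteq> {1..n} \<Longrightarrow> set (edges a xs) \<subseteq> node_pairs n"
  by (induction xs arbitrary: a) (auto simp: node_pairs_def min_def max_def)

lemma edges_wt:
  assumes "\<forall>i\<in>{1..n}. \<forall>j\<in>{1..n}. q i j = q j i"
  shows "set (a#xs) \<subseteq> {1..n} \<Longrightarrow> prod_list (map (case_prod q) (edges a xs)) = wt q a xs"
  using assms by (induction xs arbitrary: a) (auto simp: min_def max_def)

lemma walk_append: "walk G a (xs @ ys) \<longleftrightarrow> walk G a xs \<and> walk G (last (a#xs)) ys"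
  by (induction xs arbitrary: a) auto

lemma prob_edges:
  assumes "finite A" "K \<subseteq> A" "\<forall>k\<in>K. 0 \<le> r k \<and> r k \<le> 1"
  shows "measure_pmf.prob (Pi_pmf A False (\<lambda>k. bernoulli_pmf (r k))) {G. \<forall>k\<in>K. G k = b}
     = (\<Prod>k\<in>K. if b then r k else 1 - r k)"
proof -
  have "{G. \<forall>k\<in>K. G k = b} = Pi A (\<lambda>k. if k \<in> K then {b} else UNIV)"
    using assms(2) by (auto simp: Pi_def)
  hence "measure_pmf.prob (Pi_pmf A False (\<lambda>k. bernoulli_pmf (r k))) {G. \<forall>k\<in>K. G k = b}
     = (\<Prod>k\<in>A. measure_pmf.prob (bernoulli_pmf (r k)) (if k \<in> K then {b} else UNIV))"
    using assms(1) by (simp add: measure_Pi_pmf_Pi)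
  also have "\<dots> = (\<Prod>k\<in>A. if k \<in> K then (if b then r k else 1 - r k) else 1)"
    by (rule prod.cong) (use assms in \<open>auto simp: measure_pmf_single\<close>)
  also have "\<dots> = (\<Prod>k\<in>K. if b then r k else 1 - r k)"
    using assms(1,2) by (simp add: prod.If_cases Int_absorb1)
  finally show ?thesis .
qed

lemma rg_alt: "random_graph n q = Pi_pmf (node_pairs n) False (\<lambda>k. bernoulli_pmf (case_prod q k))"
  unfolding random_graph_def by (rule arg_cong[where f="Pi_pmf _ _"]) (auto simp: fun_eq_iff)

lemma finite_node_pairs: "finite (node_pairs n)"
  by (rule finite_subset[of _ "{1..n}\<times>{1..n}"]) (auto simp: node_pairs_def)

lemma prob_walk:
  assumes sym: "\<forall>i\<in>{1..n}. \<forall>j\<in>{1..n}. q i j = q j i"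
    and bounds: "\<forall>i\<in>{1..n}. \<forall>j\<in>{1..n}. 0 \<le> q i j \<and> q i j \<le> 1"
    and d: "distinct (a#xs)" and V: "set (a#xs) \<subseteq> {1..n}"
  shows "measure_pmf.prob (random_graph n q) {G. walk G a xs} = wt q a xs"
proof -
  have "{G. walk G a xs} = {G. \<forall>k\<in>set (edges a xs). G k = True}"
    using walk_edges[OF d] by auto
  moreover have "set (edges a xs) \<subseteq> node_pairs n" using edges_pairs[OF d V] .
  moreover have "\<forall>k\<in>set (edges a xs). 0 \<le> case_prod q k \<and> case_prod q k \<le> 1"
    using edges_pairs[OF d V] bounds by (auto simp: node_pairs_def)
  ultimately have "measure_pmf.prob (random_graph n q) {G. walk G a xs} = (\<Prod>k\<in>set (edges a xs). case_prod q k)"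
    unfolding rg_alt using prob_edges[of "node_pairs n" "set (edges a xs)" "case_prod q" True]
    by (simp add: finite_node_pairs)
  also have "\<dots> = prod_list (map (case_prod q) (edges a xs))"
    using edges_distinct[OF d] by (simp add: prod.distinct_set_conv_list)
  also have "\<dots> = wt q a xs" using edges_wt[OF sym V] .
  finally show ?thesis .
qed

lemma adj_in:
  assumes "\<forall>k. G k \<longrightarrow> k \<in> node_pairs n" "adj G u v"
  shows "u \<in> {1..n} \<and> v \<in> {1..n} \<and> u \<noteq> v"
proof -
  have "(u < v \<and> G (u, v)) \<or> (v < u \<and> G (v, u))" using assms(2) by (simp add: adj_def)
  then show ?thesis
  proof
    assume "u < v \<and> G (u, v)" then have "(u,v) \<in> node_pairs n" using assms(1) by blast
    then show ?thesis by (auto simp: node_pairs_def)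
  next
    assume "v < u \<and> G (v, u)" then have "(v,u) \<in> node_pairs n" using assms(1) by blast
    then show ?thesis by (auto simp: node_pairs_def)
  qed
qed

lemma path_exists:
  assumes sup: "\<forall>k. G k \<longrightarrow> k \<in> node_pairs n" and r: "(adj G)\<^sup>*\<^sup>* s v" and s: "s \<in> S"
  shows "v \<in> S \<or> (\<exists>s'\<in>S. \<exists>xs. set xs \<subseteq> {1..n} - S \<and> distinct xs \<and> xs \<noteq> [] \<and> last xs = v \<and> walk G s' xs)"
  using r
proof (induction rule: rtranclp_induct)
  case base
  then show ?case using s by simp
next
  case (step u v)
  have v: "v \<in> {1..n}" using adj_in[OF sup step(2)] by simp
  show ?case
  proof (cases "v \<in> S")
    case False
    note vS = False
    from step(3) show ?thesis
    proof
      assume "u \<in> S"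
      then show ?thesis using vS v step(2) by (intro disjI2 bexI[of _ u] exI[of _ "[v]"]) auto
    next
      assume "\<exists>s'\<in>S. \<exists>xs. set xs \<subseteq> {1..n} - S \<and> distinct xs \<and> xs \<noteq> [] \<and> last xs = u \<and> walk G s' xs"
      then obtain s' xs where h: "s' \<in> S" "set xs \<subseteq> {1..n} - S" "distinct xs" "xs \<noteq> []" "last xs = u" "walk G s' xs"
        by blast
      show ?thesis
      proof (cases "v \<in> set xs")
        case True
        then obtain ys zs where xs: "xs = ys @ v # zs" by (meson split_list)
        have "walk G s' (ys @ [v])" using h(6) unfolding xs walk_append[of G s' ys "v # zs"]
          by (simp add: walk_append)
        then show ?thesis using h xs by (intro disjI2 bexI[of _ s'] exI[of _ "ys @ [v]"]) auto
      next
        case False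
        have "last (s' # xs) = u" using h(4,5) by simp
        hence "walk G s' (xs @ [v])" using h(6) step(2) by (simp add: walk_append)
        then show ?thesis using h False vS v by (intro disjI2 bexI[of _ s'] exI[of _ "xs @ [v]"]) auto
      qed
    qed
  qed simp
qed

lemma wt_nonneg:
  assumes "\<forall>i\<in>{1..n}. \<forall>j\<in>{1..n}. 0 \<le> q i j"
  shows "set (a#xs) \<subseteq> {1..n} \<Longrightarrow> 0 \<le> wt q a xs"
  using assms by (induction xs arbitrary: a) auto

lemma wt_sum_le:
  assumes T: "T \<subseteq> {1..n}" and hq: "\<forall>i\<in>{1..n}. (\<Sum>j\<in>T. q i j) \<le> \<gamma>"
    and nn: "\<forall>i\<in>{1..n}. \<forall>j\<in>{1..n}. 0 \<le> q i j" and g: "0 \<le> \<gamma>"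
  shows "a \<in> {1..n} \<Longrightarrow> (\<Sum>xs\<in>{xs. set xs \<subseteq> T \<and> length xs = k}. wt q a xs) \<le> \<gamma>^k"
proof (induction k arbitrary: a)
  case 0
  have "{xs. set xs \<subseteq> T \<and> length xs = 0} = {[]}" by auto
  then show ?case by simp
next
  case (Suc k)
  have fT: "finite T" using T finite_subset by blast
  let ?L = "{xs. set xs \<subseteq> T \<and> length xs = k}"
  have fL: "finite ?L" using finite_lists_length_eq[OF fT] .
  have "(\<Sum>xs\<in>{xs. set xs \<subseteq> T \<and> length xs = Suc k}. wt q a xs)
      = (\<Sum>p\<in>?L \<times> T. wt q a ((\<lambda>(xs, n). n#xs) p))"
    unfolding lists_length_Suc_eq by (subst sum.reindex) (auto simp: inj_on_def)
  also have "\<dots> = (\<Sum>xs\<in>?L. \<Sum>x\<in>T. q a x * wt q x xs)"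
    by (simp add: sum.cartesian_product split_def)
  also have "\<dots> = (\<Sum>x\<in>T. q a x * (\<Sum>xs\<in>?L. wt q x xs))"
    by (subst sum.swap) (simp add: sum_distrib_left)
  also have "\<dots> \<le> (\<Sum>x\<in>T. q a x * \<gamma>^k)"
    by (rule sum_mono, rule mult_left_mono) (use Suc T nn in auto)
  also have "\<dots> = (\<Sum>x\<in>T. q a x) * \<gamma>^k" by (simp add: sum_distrib_right)
  also have "\<dots> \<le> \<gamma> * \<gamma>^k"
    by (rule mult_right_mono) (use hq Suc g in auto)
  finally show ?case by simp
qed

lemma exp_sum:
  "measure_pmf.expectation (random_graph n q) (\<lambda>G. real (card (comp_of n G S)))
   = (\<Sum>v\<in>{1..n}. measure_pmf.prob (random_graph n q) {G. v \<in> comp_of n G S})"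
proof -
  have c: "real (card (comp_of n G S)) = (\<Sum>v\<in>{1..n}. indicator {G. v \<in> comp_of n G S} G)" for G
  proof -
    have "comp_of n G S \<subseteq> {1..n}" by (auto simp: comp_of_def)
    then have "comp_of n G S = {1..n} \<inter> {v. v \<in> comp_of n G S}" by auto
    then show ?thesis by (simp add: indicator_def sum.If_cases)
  qed
  show ?thesis unfolding c
    by (subst Bochner_Integration.integral_sum)
       (auto intro!: integrable_real_indicator simp: measure_pmf.emeasure_finite less_top[symmetric])
qed

lemma part_a:
  fixes n m :: nat and q :: "nat \<Rightarrow> nat \<Rightarrow> real" and S :: "nat set" and \<gamma> :: real
  assumes sym: "\<forall>i\<in>{1..n}. \<forall>j\<in>{1..n}. q i j = q j i"
    and bounds: "\<forall>i\<in>{1..n}. \<forall>j\<in>{1..n}. 0 \<le> q i j \<and> q i j \<le> 1"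
    and S: "S \<subseteq> {1..n}" and m: "card S = m"
    and \<gamma>: "0 < \<gamma>" "\<gamma> < 1"
    and hyp: "\<forall>i\<in>{1..n}. (\<Sum>j\<in>{1..n} - S. q i j) \<le> \<gamma>"
  shows "measure_pmf.expectation (random_graph n q) (\<lambda>G. real (card (comp_of n G S)))
             \<le> 1 / (1 - \<gamma>) * real m"
proof -
  define \<mu> where "\<mu> = random_graph n q"
  define T where "T = {1..n} - S"
  define D where "D = {xs. set xs \<subseteq> T \<and> distinct xs \<and> xs \<noteq> []}"
  define L where "L = {xs. set xs \<subseteq> T \<and> length xs \<le> n}"
  define I where "I v = {p \<in> S \<times> D. last (snd p) = v}" for v
  define P where "P v = measure_pmf.prob \<mu> {G. v \<in> comp_of n G S}" for v
  have fT: "finite T" by (simp add: T_def)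
  have fS: "finite S" using S finite_subset by blast
  have fL: "finite L" unfolding L_def using finite_lists_length_le[OF fT] .
  have DL: "D \<subseteq> L - {[]}"
  proof
    fix xs assume "xs \<in> D"
    then have "set xs \<subseteq> T" "distinct xs" "xs \<noteq> []" by (auto simp: D_def)
    moreover have "card (set xs) \<le> card T" using \<open>set xs \<subseteq> T\<close> fT by (rule card_mono[rotated])
    moreover have "card T \<le> n" using card_mono[of "{1..n}" T] by (auto simp: T_def)
    ultimately show "xs \<in> L - {[]}" by (auto simp: L_def distinct_card)
  qed
  have fD: "finite D" using DL fL finite_subset by blast
  have fI: "finite (I v)" for v unfolding I_def using fS fD by auto
  have supp: "\<forall>k. G k \<longrightarrow> k \<in> node_pairs n" if "G \<in> set_pmf \<mu>" for G
    using set_Pi_pmf_subset[OF finite_node_pairs, of n False] that unfolding \<mu>_def random_graph_def by blast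
  have Pv: "P v \<le> (\<Sum>p\<in>I v. wt q (fst p) (snd p))" if v: "v \<in> T" for v
  proof -
    have sub: "{G. v \<in> comp_of n G S} \<inter> set_pmf \<mu> \<subseteq> (\<Union>p\<in>I v. {G. walk G (fst p) (snd p)})"
    proof
      fix G assume G: "G \<in> {G. v \<in> comp_of n G S} \<inter> set_pmf \<mu>"
      then obtain s where s: "s \<in> S" "(adj G)\<^sup>*\<^sup>* s v" by (auto simp: comp_of_def)
      have "v \<notin> S" using v by (simp add: T_def)
      then obtain s' xs where "s' \<in> S" "set xs \<subseteq> T" "distinct xs" "xs \<noteq> []" "last xs = v" "walk G s' xs"
        using path_exists[OF supp s(2) s(1)] G unfolding T_def by blast
      then show "G \<in> (\<Union>p\<in>I v. {G. walk G (fst p) (snd p)})"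
        by (intro UN_I[of "(s', xs)"]) (auto simp: I_def D_def)
    qed
    have "P v = measure_pmf.prob \<mu> ({G. v \<in> comp_of n G S} \<inter> set_pmf \<mu>)"
      by (simp add: P_def measure_Int_set_pmf)
    also have "\<dots> \<le> measure_pmf.prob \<mu> (\<Union>p\<in>I v. {G. walk G (fst p) (snd p)})"
      by (rule measure_pmf.finite_measure_mono[OF sub]) simp
    also have "\<dots> \<le> (\<Sum>p\<in>I v. measure_pmf.prob \<mu> {G. walk G (fst p) (snd p)})"
      by (rule measure_pmf.finite_measure_subadditive_finite[OF fI]) simp
    also have "\<dots> = (\<Sum>p\<in>I v. wt q (fst p) (snd p))"
    proof (rule sum.cong[OF refl])
      fix p assume "p \<in> I v"
      then have "fst p \<in> S" "set (snd p) \<subseteq> T" "distinct (snd p)" by (auto simp: I_def D_def)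
      then have "distinct (fst p # snd p)" "set (fst p # snd p) \<subseteq> {1..n}" using S by (auto simp: T_def)
      then show "measure_pmf.prob \<mu> {G. walk G (fst p) (snd p)} = wt q (fst p) (snd p)"
        unfolding \<mu>_def using prob_walk[OF sym bounds] by blast
    qed
    finally show ?thesis .
  qed
  have grp: "(\<Sum>v\<in>T. \<Sum>p\<in>I v. wt q (fst p) (snd p)) = (\<Sum>p\<in>S \<times> D. wt q (fst p) (snd p))"
    unfolding I_def
    by (rule sum.group) (use fS fD fT in \<open>auto simp: D_def\<close>)
  define Gs where "Gs = (\<Sum>k\<le>n. \<gamma>^k)"
  have nn: "\<forall>i\<in>{1..n}. \<forall>j\<in>{1..n}. 0 \<le> q i j" using bounds by blast
  have TV: "T \<subseteq> {1..n}" by (auto simp: T_def)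
  have Ds: "(\<Sum>xs\<in>D. wt q s xs) \<le> Gs - 1" if s: "s \<in> S" for s
  proof -
    have sV: "s \<in> {1..n}" using s S by blast
    have wnn: "0 \<le> wt q s xs" if "xs \<in> L" for xs
      using that sV TV by (intro wt_nonneg[OF nn]) (auto simp: L_def)
    have "(\<Sum>xs\<in>D. wt q s xs) \<le> (\<Sum>xs\<in>L - {[]}. wt q s xs)"
      by (rule sum_mono2) (use fL DL wnn in auto)
    also have "\<dots> = (\<Sum>xs\<in>L. wt q s xs) - 1"
      using fL by (subst sum_diff1) (auto simp: L_def)
    also have "(\<Sum>xs\<in>L. wt q s xs) = (\<Sum>k\<le>n. \<Sum>xs\<in>{xs \<in> L. length xs = k}. wt q s xs)"
      by (rule sum.group[symmetric]) (use fL in \<open>auto simp: L_def\<close>)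
    also have "\<dots> \<le> Gs" unfolding Gs_def
    proof (rule sum_mono)
      fix k assume "k \<in> {..n}"
      then have "{xs \<in> L. length xs = k} = {xs. set xs \<subseteq> T \<and> length xs = k}" by (auto simp: L_def)
      then show "(\<Sum>xs\<in>{xs \<in> L. length xs = k}. wt q s xs) \<le> \<gamma>^k"
        using wt_sum_le[OF TV _ nn, of \<gamma> s k] hyp sV \<gamma> by (simp add: T_def)
    qed
    finally show ?thesis by simp
  qed
  have "measure_pmf.expectation \<mu> (\<lambda>G. real (card (comp_of n G S))) = (\<Sum>v\<in>{1..n}. P v)"
    unfolding \<mu>_def P_def by (rule exp_sum)
  also have "\<dots> = (\<Sum>v\<in>T. P v) + (\<Sum>v\<in>S. P v)"
    unfolding T_def by (rule sum.subset_diff[OF S]) simp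
  also have "\<dots> \<le> (\<Sum>v\<in>T. \<Sum>p\<in>I v. wt q (fst p) (snd p)) + (\<Sum>v\<in>S. 1)"
    by (intro add_mono sum_mono Pv) (auto simp: P_def)
  also have "\<dots> = (\<Sum>s\<in>S. \<Sum>xs\<in>D. wt q s xs) + real m"
    unfolding grp using m by (simp add: sum.cartesian_product split_def)
  also have "\<dots> \<le> (\<Sum>s\<in>S. Gs - 1) + real m"
    by (intro add_mono sum_mono Ds) auto
  also have "\<dots> = real m * Gs" using m by (simp add: algebra_simps)
  also have "\<dots> \<le> real m * (1 / (1 - \<gamma>))"
  proof (rule mult_left_mono)
    have "Gs = (\<Sum>k<Suc n. \<gamma>^k)" unfolding Gs_def by (simp add: lessThan_Suc_atMost)
    also have "\<dots> = (1 - \<gamma>^Suc n) / (1 - \<gamma>)" by (subst sum_gp_strict) (use \<gamma> in auto)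
    also have "\<dots> \<le> 1 / (1 - \<gamma>)" using \<gamma> by (intro divide_right_mono) auto
    finally show "Gs \<le> 1 / (1 - \<gamma>)" .
  qed simp
  finally show ?thesis unfolding \<mu>_def by (simp add: mult.commute)
qed

lemma final_ineq:
  fixes N M \<gamma> x :: real
  assumes "0 < N" "0 < \<gamma>" "0 \<le> M" "M \<le> N" "x * (1 + \<gamma> / N * M) \<le> 1"
  shows "(N + \<gamma> * N) / (N + \<gamma> * M) * M \<le> (N - M) * (1 - x) + M"
proof -
  have pos: "0 < N + \<gamma> * M" using assms by (simp add: add_pos_nonneg)
  have e: "x * (N + \<gamma> * M) = N * (x * (1 + \<gamma> / N * M))" using assms(1) by (simp add: field_simps)
  have "x * (N + \<gamma> * M) \<le> N"
    unfolding e using mult_left_mono[OF assms(5), of N] assms(1) by simp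
  hence h1: "\<gamma> * M \<le> (1 - x) * (N + \<gamma> * M)" by (simp add: algebra_simps)
  have "(N - M) * (\<gamma> * M) \<le> (N - M) * ((1 - x) * (N + \<gamma> * M))"
    using h1 assms(4) by (intro mult_left_mono) auto
  hence "(N + \<gamma> * N) * M \<le> ((N - M) * (1 - x) + M) * (N + \<gamma> * M)"
    by (simp add: algebra_simps)
  thus ?thesis using pos by (simp add: pos_divide_le_eq mult.commute)
qed

lemma pow_ineq:
  fixes p :: real
  assumes "0 \<le> p" "p \<le> 1"
  shows "(1 - p)^m * (1 + p * real m) \<le> 1"
proof -
  have "1 + real m * p \<le> (1 + p)^m" using assms by (intro Bernoulli_inequality) simp
  hence "(1 - p)^m * (1 + p * real m) \<le> (1 - p)^m * (1 + p)^m"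
    using assms by (intro mult_left_mono) (auto simp: mult.commute)
  also have "\<dots> = (1 - p * p)^m" by (simp add: power_mult_distrib[symmetric] algebra_simps)
  also have "\<dots> \<le> 1" using assms by (intro power_le_one) (auto simp: mult_le_one)
  finally show ?thesis .
qed

lemma part_b:
  fixes n m :: nat and q :: "nat \<Rightarrow> nat \<Rightarrow> real" and S :: "nat set" and \<gamma> :: real
  assumes sym: "\<forall>i\<in>{1..n}. \<forall>j\<in>{1..n}. q i j = q j i"
    and bounds: "\<forall>i\<in>{1..n}. \<forall>j\<in>{1..n}. 0 \<le> q i j \<and> q i j \<le> 1"
    and S: "S \<subseteq> {1..n}" and m: "card S = m"
    and \<gamma>: "0 < \<gamma>" "\<gamma> < 1"
    and hyp: "\<forall>i\<in>{1..n} - S. \<forall>j\<in>{1..n}. i \<noteq> j \<longrightarrow> q i j = \<gamma> / real n"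
  shows "measure_pmf.expectation (random_graph n q) (\<lambda>G. real (card (comp_of n G S)))
             \<ge> (real n + \<gamma> * real n) / (real n + \<gamma> * real m) * real m"
proof (cases "m = 0")
  case True
  then show ?thesis by (simp add: Bochner_Integration.integral_nonneg)
next
  case False
  define \<mu> where "\<mu> = random_graph n q"
  define T where "T = {1..n} - S"
  define p where "p = \<gamma> / real n"
  define P where "P v = measure_pmf.prob \<mu> {G. v \<in> comp_of n G S}" for v
  have fS: "finite S" using S finite_subset by blast
  have mn: "m \<le> n" using card_mono[OF _ S] m by simp
  with False have n0: "0 < n" by simp
  have p01: "0 \<le> p" "p \<le> 1" using \<gamma> n0 by (auto simp: p_def field_simps)
  have cT: "card T = n - m" unfolding T_def using S m fS by (simp add: card_Diff_subset)
  have PS: "P v = 1" if v: "v \<in> S" for v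
  proof -
    have "{G. v \<in> comp_of n G S} = UNIV" using v S by (auto simp: comp_of_def)
    then show ?thesis by (simp add: P_def)
  qed
  have PT: "1 - (1 - p)^m \<le> P v" if v: "v \<in> T" for v
  proof -
    define K where "K = (\<lambda>s. (min s v, max s v)) ` S"
    have vV: "v \<in> {1..n}" "v \<notin> S" using v by (auto simp: T_def)
    have sv: "\<And>s. s \<in> S \<Longrightarrow> s \<noteq> v" using vV by auto
    have Kp: "K \<subseteq> node_pairs n" using S vV sv by (force simp: K_def node_pairs_def min_def max_def)
    have sub: "{G. v \<notin> comp_of n G S} \<subseteq> {G. \<forall>k\<in>K. G k = False}"
    proof safe
      fix G k assume nv: "v \<notin> comp_of n G S" and k: "k \<in> K" and Gk: "G k"
      then obtain s where s: "s \<in> S" "k = (min s v, max s v)" by (auto simp: K_def)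
      have "s \<noteq> v" using s vV by auto
      then have "adj G s v" using Gk s by (auto simp: adj_def min_def max_def split: if_splits)
      then have "v \<in> comp_of n G S" using s vV by (auto simp: comp_of_def)
      with nv show False by simp
    qed
    have inj: "inj_on (\<lambda>s. (min s v, max s v)) S"
      using vV by (auto simp: inj_on_def min_def max_def split: if_splits)
    have qK: "q (min s v) (max s v) = p" if "s \<in> S" for s
    proof -
      have "s \<in> {1..n}" "s \<noteq> v" using that S sv by auto
      moreover have "q v s = p" using hyp vV \<open>s \<in> {1..n}\<close> \<open>s \<noteq> v\<close> by (auto simp: p_def)
      moreover have "q s v = q v s" using sym vV \<open>s \<in> {1..n}\<close> by auto
      ultimately show ?thesis by (auto simp: min_def max_def)
    qed
    have kb: "\<forall>k\<in>K. 0 \<le> case_prod q k \<and> case_prod q k \<le> 1"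
    proof
      fix k assume "k \<in> K"
      then obtain i j where "k = (i, j)" "i \<in> {1..n}" "j \<in> {1..n}" using Kp by (auto simp: node_pairs_def)
      then show "0 \<le> case_prod q k \<and> case_prod q k \<le> 1" using bounds by simp
    qed
    have "measure_pmf.prob \<mu> {G. \<forall>k\<in>K. G k = False} = (\<Prod>k\<in>K. 1 - case_prod q k)"
      unfolding \<mu>_def rg_alt
      using prob_edges[OF finite_node_pairs Kp kb, of False] by simp
    also have "\<dots> = (\<Prod>s\<in>S. 1 - p)"
      unfolding K_def by (subst prod.reindex[OF inj]) (auto intro!: prod.cong simp: qK)
    also have "\<dots> = (1 - p)^m" using m by simp
    finally have e: "measure_pmf.prob \<mu> {G. \<forall>k\<in>K. G k = False} = (1 - p)^m" .
    have "measure_pmf.prob \<mu> {G. v \<notin> comp_of n G S} \<le> (1 - p)^m"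
      using measure_pmf.finite_measure_mono[OF sub, of \<mu>] e by simp
    moreover have "measure_pmf.prob \<mu> {G. v \<notin> comp_of n G S} = 1 - P v"
    proof -
      have "{G. v \<notin> comp_of n G S} = space (measure_pmf \<mu>) - {G. v \<in> comp_of n G S}" by auto
      then show ?thesis unfolding P_def using measure_pmf.prob_compl[of "{G. v \<in> comp_of n G S}" \<mu>] by simp
    qed
    ultimately show ?thesis by simp
  qed
  have "(real n + \<gamma> * real n) / (real n + \<gamma> * real m) * real m
      \<le> (real n - real m) * (1 - (1 - p)^m) + real m"
    using final_ineq[of "real n" \<gamma> "real m" "(1 - p)^m"] pow_ineq[OF p01, of m] n0 \<gamma> mn
    by (simp add: p_def)
  also have "\<dots> = (\<Sum>v\<in>T. 1 - (1 - p)^m) + (\<Sum>v\<in>S. 1)"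
    using cT m mn by (simp add: of_nat_diff)
  also have "\<dots> \<le> (\<Sum>v\<in>T. P v) + (\<Sum>v\<in>S. P v)"
    by (intro add_mono sum_mono) (auto simp: PT PS)
  also have "\<dots> = (\<Sum>v\<in>{1..n}. P v)"
    unfolding T_def by (rule sum.subset_diff[OF S, symmetric]) simp
  also have "\<dots> = measure_pmf.expectation \<mu> (\<lambda>G. real (card (comp_of n G S)))"
    unfolding \<mu>_def P_def by (rule exp_sum[symmetric])
  finally show ?thesis unfolding \<mu>_def .
qed

theorem lemma1:
  fixes n m :: nat and q :: "nat \<Rightarrow> nat \<Rightarrow> real" and S :: "nat set" and \<gamma> :: real
  assumes sym: "\<forall>i\<in>{1..n}. \<forall>j\<in>{1..n}. q i j = q j i"
    and bounds: "\<forall>i\<in>{1..n}. \<forall>j\<in>{1..n}. 0 \<le> q i j \<and> q i j \<le> 1"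
    and S: "S \<subseteq> {1..n}" and m: "card S = m"
    and \<gamma>: "0 < \<gamma>" "\<gamma> < 1"
  shows "((\<forall>i\<in>{1..n}. (\<Sum>j\<in>{1..n} - S. q i j) \<le> \<gamma>) \<longrightarrow>
           measure_pmf.expectation (random_graph n q) (\<lambda>G. real (card (comp_of n G S)))
             \<le> 1 / (1 - \<gamma>) * real m)
       \<and> ((\<forall>i\<in>{1..n} - S. \<forall>j\<in>{1..n}. i \<noteq> j \<longrightarrow> q i j = \<gamma> / real n) \<longrightarrow>
           measure_pmf.expectation (random_graph n q) (\<lambda>G. real (card (comp_of n G S)))
             \<ge> (real n + \<gamma> * real n) / (real n + \<gamma> * real m) * real m)"
  using part_a[OF sym bounds S m \<gamma>] part_b[OF sym bounds S m \<gamma>] by blast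

end
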